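(* Let $\alpha>0$ and $g,h\in\mathbb{R}$ with $h>g$, and put $\gamma=h-g>0$ and $\lambda=1-g$. Assume the generic (nondegenerate) condition: there is no integer $k\geq 0$ with $k\gamma-g=-1$. Let $F_0\in(0,1)$ and $X_0\in\mathbb{R}$, and let $F$ be a differentiable function on an interval $I\ni X_0$ with values in $(0,1)$ satisfying $$\frac{dF}{dX}=\alpha\,(F^g-F^h),\qquad F(X_0)=F_0 .$$ Then for every $X\in I$, writing $F=F(X)$, $$X = X_0+\frac{F^{\lambda}}{\alpha\lambda}\left(1+\frac{\lambda F^{\gamma}}{\gamma}\,\Phi\!\left[F^{\gamma},1,1+\frac{\lambda}{\gamma}\right]\right)-\frac{F_0^{\lambda}}{\alpha\lambda}\left(1+\frac{\lambda F_0^{\gamma}}{\gamma}\,\Phi\!\left[F_0^{\gamma},1,1+\frac{\lambda}{\gamma}\right]\right),$$ where $\Phi$ is Lerch's transcendent. (Under the generic condition $\lambda\neq 0$ and $1+\lambda/\gamma\notin\{0,-1,-2,\dots\}$, so all terms are defined.)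
   Context: Lerch's transcendent is defined by $\Phi[z,s,v]=\sum_{n=0}^{\infty}\frac{z^n}{(v+n)^s}$ for $|z|<1$ and $v\notin\{0,-1,-2,\dots\}$. The differential equation defines the S-distribution: $F$ is the cumulative distribution function, $dF/dX$ the density, and the formula gives the quantile $X$ as a function of the cumulative value $F$. *)

theory Defs
  imports "HOL-Analysis.Analysis"
begin

text \<open>The power uses powr
  (real exponent); in the application s = 1, so (v+n) powr 1 is replaced by plain
  division to allow negative v+n.\<close>
definition LerchPhi :: "real \<Rightarrow> real \<Rightarrow> real \<Rightarrow> real" where
  "LerchPhi z s v = (\<Sum>n. z ^ n / (if s = 1 then v + real n else (v + real n) powr s))"

end

theory Submission imports Defs begin

lemma coef_summable:
  fixes gm lm z :: real and k :: nat
  assumes gm: "gm > 0" and z: "\<bar>z\<bar> < 1"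
  shows "summable (\<lambda>n. 1 / (gm * real (n + k) + lm) * z ^ n)"
proof (rule summable_comparison_test_ev)
  show "summable (\<lambda>n. \<bar>z\<bar> ^ n)" using z by (simp add: summable_geometric)
  obtain N :: nat where N: "real N \<ge> (1 - lm) / gm" using real_arch_simple by blast
  show "\<forall>\<^sub>F n in sequentially. norm (1 / (gm * real (n + k) + lm) * z ^ n) \<le> \<bar>z\<bar> ^ n"
    unfolding eventually_sequentially
  proof (intro exI allI impI)
    fix n assume "N \<le> n"
    then have "real (n+k) \<ge> (1 - lm) / gm" using N by simp
    then have "gm * real (n + k) \<ge> 1 - lm" using gm by (simp add: field_simps)
    then have d: "gm * real (n + k) + lm \<ge> 1" by simp
    have e: "norm (1 / (gm * real (n + k) + lm) * z ^ n) = \<bar>z\<bar> ^ n / (gm * real (n + k) + lm)"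
      using d by (simp add: abs_mult power_abs)
    have "\<bar>z\<bar> ^ n / (gm * real (n + k) + lm) \<le> \<bar>z\<bar> ^ n * 1"
      using mult_left_mono[OF d, of "\<bar>z\<bar> ^ n"] d by (simp add: divide_le_eq)
    then show "norm (1 / (gm * real (n + k) + lm) * z ^ n) \<le> \<bar>z\<bar> ^ n" using e by simp
  qed
qed

definition cc :: "real \<Rightarrow> real \<Rightarrow> nat \<Rightarrow> real" where
  "cc gm lm n = 1 / (gm * real n + lm)"

definition PP :: "real \<Rightarrow> real \<Rightarrow> real \<Rightarrow> real" where
  "PP gm lm z = (\<Sum>n. cc gm lm n * z ^ n)"

lemma PP_deriv:
  assumes gm: "gm > 0" and z: "\<bar>z\<bar> < 1"
  shows "(PP gm lm has_real_derivative (\<Sum>n. diffs (cc gm lm) n * z ^ n)) (at z)"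
proof -
  have "((\<lambda>z. \<Sum>n. cc gm lm n * z^n) has_field_derivative (\<Sum>n. diffs (cc gm lm) n * z^n)) (at z)"
    by (rule termdiffs_strong'[where K=1]) (use coef_summable[OF gm, of _ 0] z in \<open>auto simp: cc_def\<close>)
  then show ?thesis by (simp add: PP_def[abs_def])
qed

lemma PP_key:
  assumes gm: "gm > 0" and z: "\<bar>z\<bar> < 1" and nz: "\<And>n::nat. gm * real n + lm \<noteq> 0"
  shows "lm * PP gm lm z + gm * (z * (\<Sum>n. diffs (cc gm lm) n * z ^ n)) = 1 / (1 - z)"
proof -
  let ?D = "\<Sum>n. diffs (cc gm lm) n * z ^ n"
  have s0: "summable (\<lambda>n. cc gm lm n * z ^ n)"
    using coef_summable[OF gm z, of 0] by (simp add: cc_def)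
  have S1: "(\<lambda>n. cc gm lm n * z ^ n) sums PP gm lm z"
    using s0 by (simp add: PP_def summable_sums)
  have "summable (\<lambda>n. diffs (cc gm lm) n * z ^ n)"
    by (rule termdiff_converges[where K=1]) (use coef_summable[OF gm, of _ 0] z in \<open>auto simp: cc_def\<close>)
  then have S2: "(\<lambda>n. z * (diffs (cc gm lm) n * z ^ n)) sums (z * ?D)"
    by (intro sums_mult summable_sums)
  define f where "f m = real m * cc gm lm m * z ^ m" for m
  have "(\<lambda>n. f (Suc n)) sums (z * ?D)"
    using S2 by (simp add: f_def diffs_def mult_ac)
  then have S3: "f sums (z * ?D)"
    by (subst (asm) sums_Suc_iff) (simp add: f_def)
  have "(\<lambda>n. lm * (cc gm lm n * z ^ n) + gm * f n) sums (lm * PP gm lm z + gm * (z * ?D))"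
    by (intro sums_add sums_mult S1 S3)
  moreover have "(\<lambda>n. lm * (cc gm lm n * z ^ n) + gm * f n) = (\<lambda>n. z ^ n)"
  proof
    fix n
    have "lm * cc gm lm n + gm * real n * cc gm lm n = 1"
    proof -
      have "(gm * real n + lm) * cc gm lm n = 1" using nz[of n] by (simp add: cc_def)
      then show ?thesis by (simp add: algebra_simps)
    qed
    then show "lm * (cc gm lm n * z ^ n) + gm * f n = z ^ n"
      unfolding f_def by (metis (no_types) distrib_right mult.assoc mult_1 )
  qed
  ultimately have "(\<lambda>n. z ^ n) sums (lm * PP gm lm z + gm * (z * ?D))" by simp
  moreover have "(\<lambda>n. z ^ n) sums (1 / (1 - z))" using z by (intro geometric_sums) simp
  ultimately show ?thesis using sums_unique2 by blast
qed

lemma Lerch_PP: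
  assumes gm: "gm > 0" and z: "\<bar>z\<bar> < 1" and nz: "\<And>n::nat. gm * real n + lm \<noteq> 0"
  shows "1 + lm * z / gm * LerchPhi z 1 (1 + lm / gm) = lm * PP gm lm z"
proof -
  define t where "t n = z ^ n / (1 + lm / gm + real n)" for n
  have L: "LerchPhi z 1 (1 + lm / gm) = (\<Sum>n. t n)" by (simp add: LerchPhi_def t_def)
  have tn: "t n = gm * (1 / (gm * real (n + 1) + lm) * z ^ n)" for n
  proof -
    have "1 + lm / gm + real n = (gm * real (n + 1) + lm) / gm" using gm by (simp add: field_simps)
    then show ?thesis unfolding t_def by simp
  qed
  have "summable t" unfolding tn by (intro summable_mult coef_summable[OF gm z])
  then have S1: "(\<lambda>n. lm * z / gm * t n) sums (lm * z / gm * (\<Sum>n. t n))"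
    by (intro sums_mult summable_sums)
  have "(\<lambda>n. cc gm lm n * z ^ n) sums PP gm lm z"
    using coef_summable[OF gm z, of 0] by (simp add: cc_def PP_def summable_sums)
  then have S2: "(\<lambda>n. cc gm lm (Suc n) * z ^ (Suc n)) sums (PP gm lm z - cc gm lm 0 * z ^ 0)"
    by (subst sums_Suc_iff) simp
  have eq: "lm * z / gm * t n = lm * (cc gm lm (Suc n) * z ^ (Suc n))" for n
    unfolding tn cc_def using gm by (simp add: field_simps)
  have "(\<lambda>n. lm * (cc gm lm (Suc n) * z ^ (Suc n))) sums (lm * (PP gm lm z - cc gm lm 0 * z ^ 0))"
    by (intro sums_mult S2)
  then have "lm * z / gm * (\<Sum>n. t n) = lm * (PP gm lm z - cc gm lm 0 * z ^ 0)"
    using S1 unfolding eq using sums_unique2 by blast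
  moreover have "lm \<noteq> 0" using nz[of 0] by simp
  ultimately show ?thesis unfolding L by (simp add: cc_def algebra_simps)
qed

lemma alg_aux: "(c::real) * b = a * z \<Longrightarrow> lm * a * P + D * (gm * b) * c = a * (lm * P + gm * (z * D))"
  by algebra

lemma G_deriv:
  fixes g h y :: real
  assumes gh: "h > g" and y: "0 < y" "y < 1" and nz: "\<And>n::nat. (h - g) * real n + (1 - g) \<noteq> 0"
  shows "((\<lambda>y. y powr (1 - g) * PP (h - g) (1 - g) (y powr (h - g)))
          has_real_derivative 1 / (y powr g - y powr h)) (at y)"
proof -
  let ?gm = "h - g" and ?lm = "1 - g"
  let ?z = "y powr ?gm"
  let ?D = "\<Sum>n. diffs (cc ?gm ?lm) n * ?z ^ n"
  have gm: "?gm > 0" using gh by simp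
  have z0: "0 < ?z" using y by simp
  have z1: "?z < 1" using powr_less_mono2[OF gm, of y 1] y by simp
  have za: "\<bar>?z\<bar> < 1" using z0 z1 by simp
  have d1: "((\<lambda>y. PP ?gm ?lm (y powr ?gm)) has_real_derivative ?D * (?gm * y powr (?gm - 1))) (at y)"
    by (rule DERIV_chain2[OF PP_deriv[OF gm za] has_real_derivative_powr[OF y(1)]])
  have d2: "((\<lambda>y. y powr ?lm * PP ?gm ?lm (y powr ?gm)) has_real_derivative
      (?lm * y powr (?lm - 1)) * PP ?gm ?lm ?z + (?D * (?gm * y powr (?gm - 1))) * y powr ?lm) (at y)"
    by (rule DERIV_mult[OF has_real_derivative_powr[OF y(1)] d1])
  have key: "?lm * PP ?gm ?lm ?z + ?gm * (?z * ?D) = 1 / (1 - ?z)"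
    by (rule PP_key[OF gm za nz])
  have e1: "y powr ?lm * y powr (?gm - 1) = y powr (?lm - 1) * ?z"
    by (simp add: powr_add[symmetric])
  have "(?lm * y powr (?lm - 1)) * PP ?gm ?lm ?z + (?D * (?gm * y powr (?gm - 1))) * y powr ?lm
      = y powr (?lm - 1) * (?lm * PP ?gm ?lm ?z + ?gm * (?z * ?D))"
    by (rule alg_aux[OF e1])
  also have "\<dots> = y powr (?lm - 1) / (1 - ?z)" using key by simp
  also have "\<dots> = 1 / (y powr g - y powr h)"
  proof -
    have a: "y powr (?lm - 1) = 1 / y powr g" by (simp add: powr_minus divide_inverse)
    have b: "y powr h = y powr g * ?z" by (simp add: powr_add[symmetric])
    show ?thesis unfolding a b using z1 y by (simp add: field_simps)
  qed
  finally show ?thesis using d2 by simp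
qed

theorem mainTheorem1:
  fixes \<alpha> g h F0 X0 :: real and I :: "real set" and F :: "real \<Rightarrow> real"
  assumes "\<alpha> > 0" and "h > g"
    and generic: "\<not> (\<exists>k::nat. real k * (h - g) - g = -1)"
    and "0 < F0" and "F0 < 1"
    and "is_interval I" and "X0 \<in> I"
    and range: "\<And>x. x \<in> I \<Longrightarrow> 0 < F x \<and> F x < 1"
    and ode: "\<And>x. x \<in> I \<Longrightarrow>
        (F has_real_derivative (\<alpha> * (F x powr g - F x powr h))) (at x within I)"
    and init: "F X0 = F0"
    and X: "X \<in> I"
  shows "X = X0
        + (F X) powr (1 - g) / (\<alpha> * (1 - g))
            * (1 + (1 - g) * (F X) powr (h - g) / (h - g)
                 * LerchPhi ((F X) powr (h - g)) 1 (1 + (1 - g) / (h - g)))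
        - F0 powr (1 - g) / (\<alpha> * (1 - g))
            * (1 + (1 - g) * F0 powr (h - g) / (h - g)
                 * LerchPhi (F0 powr (h - g)) 1 (1 + (1 - g) / (h - g)))"
proof -
  let ?gm = "h - g" and ?lm = "1 - g"
  define H where "H y = y powr ?lm * PP ?gm ?lm (y powr ?gm)" for y
  have gm: "?gm > 0" using assms(2) by simp
  have nz: "?gm * real n + ?lm \<noteq> 0" for n :: nat
    using generic by (auto simp: algebra_simps)
  have lm: "?lm \<noteq> 0" using nz[of 0] by simp
  have Hd: "((\<lambda>x. H (F x) - \<alpha> * x) has_real_derivative 0) (at x within I)" if x: "x \<in> I" for x
  proof -
    have r: "0 < F x" "F x < 1" using range[OF x] by auto
    have ne: "F x powr g - F x powr h \<noteq> 0"
    proof -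
      have "F x powr ?gm < 1" using powr_less_mono2[OF gm, of "F x" 1] r by simp
      moreover have "F x powr h = F x powr g * F x powr ?gm" by (simp add: powr_add[symmetric])
      ultimately show ?thesis using r assms(2) by simp
    qed
    have "((\<lambda>x. H (F x)) has_real_derivative
        1 / (F x powr g - F x powr h) * (\<alpha> * (F x powr g - F x powr h))) (at x within I)"
      unfolding H_def by (rule DERIV_chain2[OF G_deriv[OF assms(2) r nz] ode[OF x]])
    then have "((\<lambda>x. H (F x)) has_real_derivative \<alpha>) (at x within I)" using ne by simp
    then have "((\<lambda>x. H (F x) - \<alpha> * x) has_real_derivative \<alpha> - \<alpha> * 1) (at x within I)"
      by (intro DERIV_diff DERIV_cmult DERIV_ident)
    then show ?thesis by simp
  qed
  obtain c where c: "\<forall>x\<in>I. H (F x) - \<alpha> * x = c"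
    using has_field_derivative_zero_constant[OF is_interval_convex[OF assms(6)] Hd] by blast
  have eqX: "H (F X) - \<alpha> * X = H F0 - \<alpha> * X0" using c X assms(7) init by metis
  have T: "y powr ?lm / (\<alpha> * ?lm) * (1 + ?lm * y powr ?gm / ?gm * LerchPhi (y powr ?gm) 1 (1 + ?lm / ?gm))
      = H y / \<alpha>" if "0 < y" "y < 1" for y
  proof -
    have "\<bar>y powr ?gm\<bar> < 1" using powr_less_mono2[OF gm, of y 1] that by simp
    from Lerch_PP[OF gm this nz]
    have "1 + ?lm * y powr ?gm / ?gm * LerchPhi (y powr ?gm) 1 (1 + ?lm / ?gm) = ?lm * PP ?gm ?lm (y powr ?gm)"
      by simp
    then show ?thesis unfolding H_def using lm assms(1) by simp
  qed
  show ?thesis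
    unfolding T[OF range[OF X, THEN conjunct1] range[OF X, THEN conjunct2]] T[OF assms(4,5)]
    using eqX assms(1) by (simp add: field_simps)
qed

end
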